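(* Let $\alpha\in\mathbb{R}$. Then $\alpha$ is a weak-Bryuno number if and only if $\alpha$ is a Bryuno number.
   Context: Dimension $d=1$. For $x\in\mathbb{R}$, $\|x\|:=\min_{l\in\mathbb{Z}}|x-l|$. Bryuno: with $\Omega_\alpha(N):=\min_{\ell\in\mathbb{Z},\,0<|\ell|\le N}\|\alpha\ell\|$, $\alpha$ is a Bryuno number if $\sum_{k\ge1}2^{-k}\log\frac{1}{\Omega_\alpha(2^k)}<+\infty$ (this requires $\alpha$ irrational). Weak-Bryuno (with $\mathbb{S}^0=\{-1,1\}$): for $\ell\in\mathbb{Z}$, $\beta\in\{\pm1\}$, $\delta\in\mathbb{R}$, $\Phi(\ell,\beta,\delta):=e^{2\pi|\ell\beta|\delta}=e^{2\pi|\ell|\delta}$. Given $C>0$, $N\in\mathbb{N}$ and $c=\{c_n\}\in\ell^1(\mathbb{R}^+)$ let $g(c,n,\ell):=1$ if $2^n<|\ell|\le2^{n+1}$, $:=e^{-2^nc_n}$ if $0<|\ell|\le2^n$, $:=0$ otherwise. Fix $\mathfrak{d}>0$, set $\delta_{\beta,n}:=\mathfrak{d}$ for $n=1,\dots,N$, and for $n\ge N$ recursively $\tilde\delta_{\beta,n+1}:=\max\{\delta\le\delta_{\beta,n}:\frac{\Phi(\ell,\beta,\delta)}{\|\alpha\ell\|}g(c,n,\ell)\le\max_{\bar\beta\in\{\pm1\}}\Phi(\ell,\bar\beta,\delta_{\bar\beta,n})\ \forall\ell\in\mathbb{Z},\ 0<|\ell|\le2^{n+1}\}$ and $\delta_{\beta,n+1}:=\min_{\bar\beta\in\{\pm1\},|\beta-\bar\beta|<e^{-2^nc_n}}\tilde\delta_{\bar\beta,n+1}$.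 $\alpha$ is a weak-Bryuno number if for every $\mathfrak{d}>0$ there exist $C$, $c$, $N$ with $\inf_{\beta\in\{\pm1\}}\inf_{n\in\mathbb{N}}\delta_{\beta,n}>0$. *)

theory Defs
  imports Complex_Main
begin

definition dZ :: "real \<Rightarrow> real" where
  "dZ x = (INF l::int. \<bar>x - of_int l\<bar>)"

definition Omega :: "real \<Rightarrow> nat \<Rightarrow> real" where
  "Omega \<alpha> N = Min {dZ (\<alpha> * of_int l) | l::int. 0 < \<bar>l\<bar> \<and> \<bar>l\<bar> \<le> int N}"

text \<open>Since \<open>log(1/0) = +\<infinity>\<close>,
  finiteness requires all \<open>\<Omega>(2^k) > 0\<close>; the terms are then nonnegative, so finiteness
  of the sum is summability.\<close>
definition bryuno :: "real \<Rightarrow> bool" where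
  "bryuno \<alpha> \<longleftrightarrow> (\<forall>k\<ge>1. Omega \<alpha> (2 ^ k) > 0) \<and>
     summable (\<lambda>k. (1/2) ^ (k+1) * ln (1 / Omega \<alpha> (2 ^ (k+1))))"

definition Phi :: "int \<Rightarrow> real \<Rightarrow> real \<Rightarrow> real" where
  "Phi l \<beta> \<delta> = exp (2 * pi * \<bar>of_int l * \<beta>\<bar> * \<delta>)"

definition gfun :: "(nat \<Rightarrow> real) \<Rightarrow> nat \<Rightarrow> int \<Rightarrow> real" where
  "gfun c n l =
     (if 2 ^ n < \<bar>l\<bar> \<and> \<bar>l\<bar> \<le> 2 ^ (n+1) then 1
      else if 0 < \<bar>l\<bar> \<and> \<bar>l\<bar> \<le> 2 ^ n then exp (- (2 ^ n * c n))
      else 0)"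

text \<open>The condition
  \<open>\<Phi>(l,\<beta>,\<delta>) g(c,n,l) / \<parallel>\<alpha> l\<parallel> \<le> max_\<beta>' \<Phi>(l,\<beta>',\<delta>_{\<beta>',n})\<close> is written with
  the denominator cleared (g > 0 on the relevant range, so \<open>\<parallel>\<alpha> l\<parallel> = 0\<close> means the
  left side is \<open>+\<infinity>\<close> and the condition fails).\<close>
definition tilde_set ::
  "real \<Rightarrow> (nat \<Rightarrow> real) \<Rightarrow> (nat \<Rightarrow> real \<Rightarrow> real) \<Rightarrow> nat \<Rightarrow> real \<Rightarrow> real set" where
  "tilde_set \<alpha> c \<delta> n \<beta> =
     {x. x \<le> \<delta> n \<beta> \<and>
        (\<forall>l::int. 0 < \<bar>l\<bar> \<and> \<bar>l\<bar> \<le> 2 ^ (n+1) \<longrightarrow>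
           Phi l \<beta> x * gfun c n l
             \<le> dZ (\<alpha> * of_int l) * Max {Phi l b (\<delta> n b) | b. b \<in> {-1, 1}})}"

text \<open>\<open>\<delta>\<close> is the (unique, if it exists) sequence \<open>\<delta>_{\<beta>,n}\<close>, n \<ge> 1, \<beta> \<in> {-1,1},
  produced by the recursion; existence of every maximum is part of the requirement.\<close>
definition wb_seq ::
  "real \<Rightarrow> real \<Rightarrow> (nat \<Rightarrow> real) \<Rightarrow> nat \<Rightarrow> (nat \<Rightarrow> real \<Rightarrow> real) \<Rightarrow> bool" where
  "wb_seq \<alpha> d c N \<delta> \<longleftrightarrow>
     (\<forall>n \<beta>. 1 \<le> n \<and> n \<le> N \<and> \<beta> \<in> {-1, 1} \<longrightarrow> \<delta> n \<beta> = d) \<and>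
     (\<forall>n\<ge>N. \<exists>t :: real \<Rightarrow> real.
        (\<forall>b\<in>{-1, 1}. t b \<in> tilde_set \<alpha> c \<delta> n b \<and> (\<forall>x\<in>tilde_set \<alpha> c \<delta> n b. x \<le> t b)) \<and>
        (\<forall>\<beta>\<in>{-1, 1}. \<delta> (Suc n) \<beta> =
           Min {t b | b. b \<in> {-1, 1} \<and> \<bar>\<beta> - b\<bar> < exp (- (2 ^ n * c n))}))"

definition weak_bryuno :: "real \<Rightarrow> bool" where
  "weak_bryuno \<alpha> \<longleftrightarrow>
     (\<forall>d>0. \<exists>C::real. C > 0 \<and> (\<exists>c::nat \<Rightarrow> real. (\<forall>n. c n > 0) \<and> summable c \<and>
        (\<exists>N::nat. N \<ge> 1 \<and> (\<exists>\<delta>. wb_seq \<alpha> d c N \<delta> \<and>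
           (\<exists>\<epsilon>>0. \<forall>n\<ge>1. \<forall>\<beta>\<in>{-1, 1}. \<epsilon> \<le> \<delta> n \<beta>)))))"

end

theory Submission
  imports Defs
begin


lemma dZ_nonneg: "0 \<le> dZ x"
  unfolding dZ_def by (rule cINF_greatest) auto

lemma dZ_lt1: "dZ x < 1"
proof -
  have "dZ x \<le> \<bar>x - of_int \<lfloor>x\<rfloor>\<bar>"
    unfolding dZ_def by (rule cINF_lower) (auto intro: bdd_belowI[where m=0])
  also have "\<dots> < 1" by linarith
  finally show ?thesis .
qed

lemma Omega_set_eq: "{dZ (\<alpha> * of_int l) | l::int. 0 < \<bar>l\<bar> \<and> \<bar>l\<bar> \<le> int N}
   = (\<lambda>l. dZ (\<alpha> * of_int l)) ` {l. 0 < \<bar>l\<bar> \<and> \<bar>l\<bar> \<le> int N}"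
  by auto

lemma Lset_finite: "finite {l::int. 0 < \<bar>l\<bar> \<and> \<bar>l\<bar> \<le> M}"
  by (rule finite_subset[of _ "{-M..M}"]) auto

lemma Omega_le: "0 < \<bar>l\<bar> \<Longrightarrow> \<bar>l\<bar> \<le> int N \<Longrightarrow> Omega \<alpha> N \<le> dZ (\<alpha> * of_int l)"
  unfolding Omega_def Omega_set_eq
  by (rule Min_le[OF finite_imageI[OF Lset_finite]]) auto

lemma Omega_attained: "N \<ge> 1 \<Longrightarrow> \<exists>l::int. 0 < \<bar>l\<bar> \<and> \<bar>l\<bar> \<le> int N \<and> Omega \<alpha> N = dZ (\<alpha> * of_int l)"
proof -
  assume "N \<ge> 1"
  hence ne: "{l::int. 0 < \<bar>l\<bar> \<and> \<bar>l\<bar> \<le> int N} \<noteq> {}" by (auto intro!: exI[of _ 1])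
  have "Omega \<alpha> N \<in> (\<lambda>l. dZ (\<alpha> * of_int l)) ` {l. 0 < \<bar>l\<bar> \<and> \<bar>l\<bar> \<le> int N}"
    unfolding Omega_def Omega_set_eq
    by (rule Min_in[OF finite_imageI[OF Lset_finite]]) (use ne in auto)
  thus ?thesis by auto
qed

lemma gfun_pos: "0 < \<bar>l\<bar> \<Longrightarrow> \<bar>l\<bar> \<le> 2^(n+1) \<Longrightarrow> gfun c n l > 0"
  unfolding gfun_def by auto

lemma Phi_pm: "b \<in> {-1, 1} \<Longrightarrow> Phi l b x = exp (2 * pi * \<bar>of_int l\<bar> * x)"
  unfolding Phi_def by auto

lemma Max_Phi: "Max {Phi l b (\<delta> n b) | b. b \<in> {-1, 1::real}} = exp (2 * pi * \<bar>of_int l\<bar> * max (\<delta> n 1) (\<delta> n (-1)))"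
proof -
  have "{Phi l b (\<delta> n b) | b. b \<in> {-1, 1::real}} = {exp (2 * pi * \<bar>of_int l\<bar> * \<delta> n (-1)), exp (2 * pi * \<bar>of_int l\<bar> * \<delta> n 1)}"
  proof -
    have "{Phi l b (\<delta> n b) | b. b \<in> {-1, 1::real}} = {Phi l (-1) (\<delta> n (-1)), Phi l 1 (\<delta> n 1)}" by auto
    thus ?thesis by (simp add: Phi_pm)
  qed
  moreover have "max (exp (2 * pi * \<bar>of_int l\<bar> * \<delta> n (-1))) (exp (2 * pi * \<bar>of_int l\<bar> * \<delta> n 1)) = exp (2 * pi * \<bar>of_int l\<bar> * max (\<delta> n 1) (\<delta> n (-1)))"
  proof -
    have e: "max (exp a) (exp b) = exp (max a b)" for a b :: real by (auto simp: max_def)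
    show ?thesis unfolding e by (simp add: max_mult_distrib_left max.commute)
  qed
  ultimately show ?thesis by (simp add: max.commute)
qed

lemma key_equiv:
  fixes A g z x D :: real
  assumes "A > 0" "g > 0" "z > 0"
  shows "exp (A * x) * g \<le> z * exp (A * D) \<longleftrightarrow> x \<le> D + ln (z / g) / A"
proof -
  have "exp (A * x) * g \<le> z * exp (A * D) \<longleftrightarrow> exp (A * x) \<le> (z / g) * exp (A * D)"
    using assms by (simp add: field_simps)
  also have "(z / g) * exp (A * D) = exp (ln (z / g) + A * D)"
    using assms by (simp add: exp_add)
  also have "exp (A * x) \<le> exp (ln (z / g) + A * D) \<longleftrightarrow> A * x \<le> ln (z / g) + A * D" by simp
  also have "\<dots> \<longleftrightarrow> x \<le> D + ln (z / g) / A"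
    using assms by (simp add: field_simps)
  finally show ?thesis .
qed


lemma sel_set: 
  fixes b :: real and t :: "real \<Rightarrow> real" and e :: real
  assumes "b \<in> {-1, 1}" "e < 1" "0 < e"
  shows "{t b' | b'. b' \<in> {-1, 1} \<and> \<bar>b - b'\<bar> < e} = {t b}"
  using assms by (auto intro!: exI[of _ b])

lemma weak_imp_bryuno:
  assumes "weak_bryuno \<alpha>" shows "bryuno \<alpha>"
proof -
  from assms obtain c N \<delta> \<epsilon> where cpos: "\<forall>n. c n > 0" and csum: "summable c" and N1: "N \<ge> 1"
    and seq: "wb_seq \<alpha> 1 c N \<delta>" and eps: "\<epsilon> > 0" "\<forall>n\<ge>1. \<forall>\<beta>\<in>{-1, 1}. \<epsilon> \<le> \<delta> n \<beta>"
    unfolding weak_bryuno_def by (metis zero_less_one)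
  define m where "m n = max (\<delta> n 1) (\<delta> n (-1))" for n
  have step: "\<delta> (Suc n) b \<le> \<delta> n b \<and> (\<forall>l::int. 0 < \<bar>l\<bar> \<and> \<bar>l\<bar> \<le> 2^(n+1) \<longrightarrow>
      Phi l b (\<delta> (Suc n) b) * gfun c n l \<le> dZ (\<alpha> * of_int l) * exp (2 * pi * \<bar>of_int l\<bar> * m n))"
    if n: "N \<le> n" and b: "b \<in> {-1, 1}" for n b
  proof -
    from seq n obtain t where t1: "\<forall>b\<in>{-1, 1}. t b \<in> tilde_set \<alpha> c \<delta> n b"
      and t2: "\<forall>\<beta>\<in>{-1, 1}. \<delta> (Suc n) \<beta> = Min {t b | b. b \<in> {-1, 1} \<and> \<bar>\<beta> - b\<bar> < exp (- (2 ^ n * c n))}"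
      unfolding wb_seq_def by blast
    have "2 ^ n * c n > 0" using cpos by simp
    hence "exp (- (2 ^ n * c n)) < 1" by simp
    hence "{t b' | b'. b' \<in> {-1, 1} \<and> \<bar>b - b'\<bar> < exp (- (2 ^ n * c n))} = {t b}"
      by (rule sel_set[OF b]) simp
    moreover have "\<delta> (Suc n) b = Min {t b' | b'. b' \<in> {-1, 1} \<and> \<bar>b - b'\<bar> < exp (- (2 ^ n * c n))}"
      using t2 b by blast
    ultimately have "\<delta> (Suc n) b = t b" by simp
    with t1 b show ?thesis unfolding tilde_set_def Max_Phi m_def by auto
  qed
  have dpos: "dZ (\<alpha> * of_int l) > 0" if n: "N \<le> n" and l: "0 < \<bar>l\<bar>" "\<bar>l\<bar> \<le> 2^(n+1)" for n l
  proof -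
    have "0 < Phi l 1 (\<delta> (Suc n) 1) * gfun c n l" using gfun_pos[OF l] unfolding Phi_def by simp
    also have "\<dots> \<le> dZ (\<alpha> * of_int l) * exp (2 * pi * \<bar>of_int l\<bar> * m n)" using step[OF n, of 1] l by auto
    finally show ?thesis using dZ_nonneg[of "\<alpha> * of_int l"]
      by (metis less_eq_real_def mult_zero_left order_less_irrefl)
  qed
  have mdec: "m (Suc n) \<le> m n" if "N \<le> n" for n
    using step[OF that, of 1] step[OF that, of "-1"] unfolding m_def by auto
  have mlow: "\<epsilon> \<le> m n" if "1 \<le> n" for n
    using eps(2) that unfolding m_def by fastforce
  have bound: "(1/2)^(n+1) * ln (1 / dZ (\<alpha> * of_int l)) \<le> c n + 2 * pi * (m n - m (Suc n))"
    if n: "N \<le> n" and l: "0 < \<bar>l\<bar>" "\<bar>l\<bar> \<le> 2^(n+1)" for n l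
  proof -
    define z where "z = dZ (\<alpha> * of_int l)"
    define A where "A = 2 * pi * \<bar>of_int l\<bar>"
    define g where "g = gfun c n l"
    have zpos: "z > 0" using dpos[OF n l] z_def by simp
    have gpos: "g > 0" using gfun_pos[OF l] g_def by simp
    have Apos: "A > 0" using l A_def by simp
    obtain b where b: "b \<in> {-1, 1}" "\<delta> (Suc n) b = m (Suc n)"
      unfolding m_def by (metis insertCI max_def)
    have "Phi l b (\<delta> (Suc n) b) * g \<le> z * exp (A * m n)"
      using step[OF n b(1)] l unfolding z_def g_def A_def by auto
    hence "exp (A * m (Suc n)) * g \<le> z * exp (A * m n)"
      using b unfolding Phi_pm[OF b(1)] A_def by simp
    hence "ln (exp (A * m (Suc n)) * g) \<le> ln (z * exp (A * m n))"
      using gpos zpos by (subst ln_le_cancel_iff) auto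
    hence "A * m (Suc n) + ln g \<le> ln z + A * m n"
      using gpos zpos by (simp add: ln_mult)
    moreover have "- ln g \<le> 2 ^ n * c n"
      unfolding g_def gfun_def using cpos[rule_format, of n] by auto
    ultimately have h1: "ln (1 / z) \<le> A * (m n - m (Suc n)) + 2 ^ n * c n"
      using zpos by (simp add: ln_div algebra_simps)
    have md: "0 \<le> m n - m (Suc n)" using mdec[OF n] by simp
    have "(1/2::real)^(n+1) * \<bar>of_int l\<bar> \<le> (1/2)^(n+1) * 2^(n+1)"
    proof -
      have "\<bar>of_int l\<bar> \<le> (2::real)^(n+1)" using l(2) by (metis of_int_abs of_int_le_iff of_int_numeral of_int_power)
      thus ?thesis by (intro mult_left_mono) auto
    qed
    also have "\<dots> = 1" by (simp add: power_mult_distrib[symmetric])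
    finally have lh: "(1/2::real)^(n+1) * \<bar>of_int l\<bar> \<le> 1" .
    have "(1/2)^(n+1) * ln (1 / z) \<le> (1/2)^(n+1) * (A * (m n - m (Suc n)) + 2 ^ n * c n)"
      using h1 by (intro mult_left_mono) auto
    also have "\<dots> = 2 * pi * (m n - m (Suc n)) * ((1/2)^(n+1) * \<bar>of_int l\<bar>) + c n / 2"
      unfolding A_def by (simp add: algebra_simps power_mult_distrib[symmetric])
    also have "\<dots> \<le> 2 * pi * (m n - m (Suc n)) * 1 + c n"
      using lh md cpos[rule_format, of n] by (intro add_mono mult_left_mono) auto
    finally show ?thesis unfolding z_def by simp
  qed
  have Opos: "Omega \<alpha> (2 ^ k) > 0" if "k \<ge> 1" for k
  proof -
    obtain l where l: "0 < \<bar>l\<bar>" "\<bar>l\<bar> \<le> int (2 ^ k)" "Omega \<alpha> (2^k) = dZ (\<alpha> * of_int l)"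
      using Omega_attained[of "2^k" \<alpha>] by auto
    have "(2::int) ^ k \<le> 2 ^ (max N k + 1)" by (intro power_increasing) auto
    hence "\<bar>l\<bar> \<le> 2 ^ (max N k + 1)" using l(2) by simp
    thus ?thesis using dpos[of "max N k" l] l by simp
  qed
  have Ople: "Omega \<alpha> (2 ^ k) < 1" if "k \<ge> 1" for k
  proof -
    obtain l where l: "0 < \<bar>l\<bar>" "\<bar>l\<bar> \<le> int (2 ^ k)" "Omega \<alpha> (2^k) = dZ (\<alpha> * of_int l)"
      using Omega_attained[of "2^k" \<alpha>] by auto
    thus ?thesis using dZ_lt1 by simp
  qed
  have mconv: "convergent m"
  proof -
    have "decseq (\<lambda>j. m (j + N))" by (rule decseq_SucI) (simp add: mdec)
    moreover have "\<forall>i. \<epsilon> \<le> m (i + N)" using mlow N1 by simp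
    ultimately obtain L where "(\<lambda>j. m (j + N)) \<longlonglongrightarrow> L" using decseq_convergent by blast
    hence "m \<longlonglongrightarrow> L" by (rule LIMSEQ_offset)
    thus ?thesis by (auto simp: convergent_def)
  qed
  have gsum: "summable (\<lambda>n. c n + 2 * pi * (m n - m (Suc n)))"
  proof -
    obtain L where "m \<longlonglongrightarrow> L" using mconv by (auto simp: convergent_def)
    hence "summable (\<lambda>n. m n - m (Suc n))" by (rule telescope_summable')
    thus ?thesis using csum by (intro summable_add summable_mult)
  qed
  have "summable (\<lambda>k. (1/2) ^ (k+1) * ln (1 / Omega \<alpha> (2 ^ (k+1))))"
  proof (rule summable_comparison_test'[OF gsum])
    fix n assume n: "N \<le> n"
    obtain l where l: "0 < \<bar>l\<bar>" "\<bar>l\<bar> \<le> int (2 ^ (n+1))" "Omega \<alpha> (2^(n+1)) = dZ (\<alpha> * of_int l)"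
      using Omega_attained[of "2^(n+1)" \<alpha>] by auto
    have nn: "0 \<le> (1/2::real) ^ (n+1) * ln (1 / Omega \<alpha> (2 ^ (n+1)))"
      using Opos[of "n+1"] Ople[of "n+1"] by simp
    have "\<bar>l\<bar> \<le> 2^(n+1)" using l(2) by simp
    hence "(1/2)^(n+1) * ln (1 / Omega \<alpha> (2 ^ (n+1))) \<le> c n + 2 * pi * (m n - m (Suc n))"
      using bound[OF n l(1)] l(3) by simp
    thus "norm ((1/2::real) ^ (n+1) * ln (1 / Omega \<alpha> (2 ^ (n+1)))) \<le> c n + 2 * pi * (m n - m (Suc n))"
      using nn by simp
  qed
  thus ?thesis unfolding bryuno_def using Opos by blast
qed


definition hh :: "real \<Rightarrow> (nat \<Rightarrow> real) \<Rightarrow> nat \<Rightarrow> int \<Rightarrow> real" where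
  "hh \<alpha> c n l = ln (dZ (\<alpha> * of_int l) / gfun c n l) / (2 * pi * \<bar>of_int l\<bar>)"

fun Dseq :: "real \<Rightarrow> (nat \<Rightarrow> real) \<Rightarrow> real \<Rightarrow> nat \<Rightarrow> nat \<Rightarrow> real" where
  "Dseq \<alpha> c d N 0 = d"
| "Dseq \<alpha> c d N (Suc n) = (if n < N then d else
     Min (insert (Dseq \<alpha> c d N n) ((\<lambda>l. Dseq \<alpha> c d N n + hh \<alpha> c n l) ` {l. 0 < \<bar>l\<bar> \<and> \<bar>l\<bar> \<le> 2^(n+1)})))"

lemma tilde_char:
  assumes b: "\<beta> \<in> {-1, 1}" and eq: "\<delta> n 1 = a" "\<delta> n (-1) = a" "\<delta> n \<beta> = a"
    and pos: "\<forall>l::int. 0 < \<bar>l\<bar> \<and> \<bar>l\<bar> \<le> 2^(n+1) \<longrightarrow> dZ (\<alpha> * of_int l) > 0"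
  shows "x \<in> tilde_set \<alpha> c \<delta> n \<beta> \<longleftrightarrow>
     x \<le> a \<and> (\<forall>l\<in>{l. 0 < \<bar>l\<bar> \<and> \<bar>l\<bar> \<le> 2^(n+1)}. x \<le> a + hh \<alpha> c n l)"
proof -
  have *: "Phi l \<beta> x * gfun c n l \<le> dZ (\<alpha> * of_int l) * Max {Phi l b (\<delta> n b) | b. b \<in> {-1, 1}}
     \<longleftrightarrow> x \<le> a + hh \<alpha> c n l" if l: "0 < \<bar>l\<bar>" "\<bar>l\<bar> \<le> 2^(n+1)" for l
  proof -
    have "Phi l \<beta> x * gfun c n l \<le> dZ (\<alpha> * of_int l) * Max {Phi l b (\<delta> n b) | b. b \<in> {-1, 1}}
      \<longleftrightarrow> exp ((2 * pi * \<bar>of_int l\<bar>) * x) * gfun c n l \<le> dZ (\<alpha> * of_int l) * exp ((2 * pi * \<bar>of_int l\<bar>) * a)"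
      unfolding Max_Phi Phi_pm[OF b] eq by (simp add: mult.assoc)
    also have "\<dots> \<longleftrightarrow> x \<le> a + hh \<alpha> c n l" unfolding hh_def
      by (rule key_equiv) (use l pos gfun_pos[OF l] in auto)
    finally show ?thesis .
  qed
  show ?thesis unfolding tilde_set_def using * eq(3) by auto
qed


lemma bryuno_imp_weak:
  assumes "bryuno \<alpha>" shows "weak_bryuno \<alpha>"
  unfolding weak_bryuno_def
proof (intro allI impI)
  fix d :: real assume d: "d > 0"
  define L where "L k = ln (1 / Omega \<alpha> (2 ^ k))" for k
  have Opos: "Omega \<alpha> (2 ^ k) > 0" if "k \<ge> 1" for k using assms that unfolding bryuno_def by blast
  have bsum: "summable (\<lambda>k. (1/2) ^ (k+1) * L (k+1))" using assms unfolding bryuno_def L_def by blast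
  have Olt: "Omega \<alpha> (2 ^ k) < 1" for k
  proof -
    obtain l where "Omega \<alpha> (2^k) = dZ (\<alpha> * of_int l)"
      using Omega_attained[of "2^k" \<alpha>] by auto
    thus ?thesis using dZ_lt1 by simp
  qed
  have Lpos: "L k > 0" if "k \<ge> 1" for k using Opos[OF that] Olt[of k] unfolding L_def by simp
  define c where "c n = (1/2::real)^n * (L (n+1) + 1)" for n
  have cpos: "\<forall>n. c n > 0" unfolding c_def using Lpos by (simp add: add_pos_pos)
  have csum: "summable c"
  proof -
    have "summable (\<lambda>n. 2 * ((1/2) ^ (n+1) * L (n+1)) + (1/2::real)^n)"
      by (intro summable_add summable_mult bsum summable_geometric) simp
    moreover have "(\<lambda>n. 2 * ((1/2) ^ (n+1) * L (n+1)) + (1/2::real)^n) = c"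
      by (rule ext) (simp add: c_def algebra_simps)
    ultimately show ?thesis by simp
  qed
  define b where "b n = (1/2::real)^(n+1) * L (n+1) / pi" for n
  have bnn: "b n \<ge> 0" for n unfolding b_def using Lpos[of "n+1"] by simp
  have bs: "summable b" unfolding b_def by (intro summable_divide bsum)
  obtain N0 where N0: "\<forall>n\<ge>N0. norm (\<Sum>i. b (i + n)) < d/2"
    using suminf_exist_split[OF _ bs, of "d/2"] d by auto
  define N where "N = max 1 N0"
  have N1: "N \<ge> 1" unfolding N_def by simp
  have bsN: "(\<Sum>i. b (i + N)) < d/2" using N0[rule_format, of N] unfolding N_def by simp
  have bsN': "summable (\<lambda>i. b (i + N))" using bs by (rule summable_ignore_initial_segment)
  define D where "D = Dseq \<alpha> c d N"
  have dZpos: "\<forall>l::int. 0 < \<bar>l\<bar> \<and> \<bar>l\<bar> \<le> 2^(n+1) \<longrightarrow> dZ (\<alpha> * of_int l) > 0" for n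
  proof (intro allI impI)
    fix l :: int assume l: "0 < \<bar>l\<bar> \<and> \<bar>l\<bar> \<le> 2^(n+1)"
    have "Omega \<alpha> (2^(n+1)) \<le> dZ (\<alpha> * of_int l)" using l by (intro Omega_le) auto
    thus "dZ (\<alpha> * of_int l) > 0" using Opos[of "n+1"] by simp
  qed
  have hlow: "hh \<alpha> c n l \<ge> - b n" if l: "0 < \<bar>l\<bar>" "\<bar>l\<bar> \<le> 2^(n+1)" for n l
  proof -
    define z where "z = dZ (\<alpha> * of_int l)"
    have zO: "Omega \<alpha> (2^(n+1)) \<le> z" unfolding z_def using l by (intro Omega_le) auto
    have zpos: "z > 0" using zO Opos[of "n+1"] by simp
    have lnz: "- ln z \<le> L (n+1)"
      unfolding L_def using zO Opos[of "n+1"] zpos by (simp add: ln_div)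
    have Lnn: "L (n+1) \<ge> 0" using Lpos[of "n+1"] by simp
    show ?thesis
    proof (cases "2^n < \<bar>l\<bar>")
      case True
      hence g: "gfun c n l = 1" using l unfolding gfun_def by simp
      have ll: "(2::real)^n \<le> \<bar>of_int l\<bar>"
        using True by (metis less_imp_le of_int_abs of_int_le_iff of_int_numeral of_int_power)
      have "(- ln z) / (2 * pi * \<bar>of_int l\<bar>) \<le> L (n+1) / (2 * pi * 2^n)"
        by (rule frac_le) (use lnz Lnn ll in auto)
      also have "L (n+1) / (2 * pi * 2^n) = b n" unfolding b_def by (simp add: field_simps)
      finally have "- (ln z / (2 * pi * \<bar>of_int l\<bar>)) \<le> b n" by (simp only: minus_divide_left)
      thus ?thesis unfolding hh_def g z_def[symmetric] by simp
    next
      case False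
      hence g: "gfun c n l = exp (- (2 ^ n * c n))" using l unfolding gfun_def by simp
      have "2 ^ n * c n = L (n+1) + 1" unfolding c_def by (simp add: power_mult_distrib[symmetric])
      hence "ln (z / gfun c n l) = ln z + L (n+1) + 1" unfolding g using zpos by (simp add: ln_div)
      hence "ln (z / gfun c n l) \<ge> 0" using lnz by simp
      hence "hh \<alpha> c n l \<ge> 0" unfolding hh_def z_def by simp
      thus ?thesis using bnn[of n] by simp
    qed
  qed
  have Lfin: "finite {l::int. 0 < \<bar>l\<bar> \<and> \<bar>l\<bar> \<le> 2^(n+1)}" for n by (rule Lset_finite)
  have Dstep: "D (Suc n) \<ge> D n - b n" if "N \<le> n" for n
  proof -
    have "D (Suc n) = Min (insert (D n) ((\<lambda>l. D n + hh \<alpha> c n l) ` {l. 0 < \<bar>l\<bar> \<and> \<bar>l\<bar> \<le> 2^(n+1)}))"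
      using that unfolding D_def by simp
    also have "D n - b n \<le> \<dots>"
    proof (rule Min.boundedI)
      show "finite (insert (D n) ((\<lambda>l. D n + hh \<alpha> c n l) ` {l. 0 < \<bar>l\<bar> \<and> \<bar>l\<bar> \<le> 2^(n+1)}))"
        using Lfin[of n] by simp
      fix y assume "y \<in> insert (D n) ((\<lambda>l. D n + hh \<alpha> c n l) ` {l. 0 < \<bar>l\<bar> \<and> \<bar>l\<bar> \<le> 2^(n+1)})"
      then show "D n - b n \<le> y"
      proof
        assume "y = D n" thus ?thesis using bnn[of n] by simp
      next
        assume "y \<in> (\<lambda>l. D n + hh \<alpha> c n l) ` {l. 0 < \<bar>l\<bar> \<and> \<bar>l\<bar> \<le> 2^(n+1)}"
        then obtain l where "0 < \<bar>l\<bar>" "\<bar>l\<bar> \<le> 2^(n+1)" "y = D n + hh \<alpha> c n l" by blast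
        thus ?thesis using hlow[of l n] by simp
      qed
    qed simp
    finally show ?thesis .
  qed
  have Dind: "D (N + j) \<ge> d - (\<Sum>i<j. b (i + N))" for j
  proof (induction j)
    case 0
    have "D N = d" using N1 unfolding D_def by (cases N) auto
    then show ?case by simp
  next
    case (Suc j)
    have "D (N + Suc j) \<ge> D (N + j) - b (N + j)" using Dstep[of "N + j"] by simp
    then show ?case using Suc by (simp add: add.commute)
  qed
  have Dlow: "D n \<ge> d/2" if n1: "n \<ge> 1" for n
  proof (cases "n \<le> N")
    case True
    then obtain k where "n = Suc k" "k < N" using n1 by (cases n) auto
    then show ?thesis unfolding D_def using d by simp
  next
    case False
    then obtain j where j: "n = N + j" by (metis le_Suc_ex nat_le_linear)
    have "(\<Sum>i<j. b (i + N)) \<le> (\<Sum>i. b (i + N))"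
      by (rule sum_le_suminf[OF bsN']) (auto simp: bnn)
    thus ?thesis using Dind[of j] bsN j by simp
  qed
  define \<delta> where "\<delta> n (\<beta>::real) = D n" for n \<beta>
  have seq: "wb_seq \<alpha> d c N \<delta>"
    unfolding wb_seq_def
  proof (intro conjI allI impI)
    fix n :: nat and \<beta> :: real assume "1 \<le> n \<and> n \<le> N \<and> \<beta> \<in> {-1, 1}"
    then obtain k where "n = Suc k" "k < N" by (cases n) auto
    then show "\<delta> n \<beta> = d" unfolding \<delta>_def D_def by simp
  next
    fix n assume n: "N \<le> n"
    have tc: "x \<in> tilde_set \<alpha> c \<delta> n bb \<longleftrightarrow> x \<le> D (Suc n)" if bb: "bb \<in> {-1, 1}" for x bb
    proof -
      have "x \<in> tilde_set \<alpha> c \<delta> n bb \<longleftrightarrow>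
         x \<le> D n \<and> (\<forall>l\<in>{l. 0 < \<bar>l\<bar> \<and> \<bar>l\<bar> \<le> 2^(n+1)}. x \<le> D n + hh \<alpha> c n l)"
        by (rule tilde_char[OF bb]) (auto simp: \<delta>_def dZpos)
      also have "\<dots> \<longleftrightarrow> x \<le> Min (insert (D n) ((\<lambda>l. D n + hh \<alpha> c n l) ` {l. 0 < \<bar>l\<bar> \<and> \<bar>l\<bar> \<le> 2^(n+1)}))"
        using Lfin[of n] by (subst Min_ge_iff) auto
      also have "Min (insert (D n) ((\<lambda>l. D n + hh \<alpha> c n l) ` {l. 0 < \<bar>l\<bar> \<and> \<bar>l\<bar> \<le> 2^(n+1)})) = D (Suc n)"
        using n unfolding D_def by simp
      finally show ?thesis .
    qed
    show "\<exists>t :: real \<Rightarrow> real.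
        (\<forall>b\<in>{-1, 1}. t b \<in> tilde_set \<alpha> c \<delta> n b \<and> (\<forall>x\<in>tilde_set \<alpha> c \<delta> n b. x \<le> t b)) \<and>
        (\<forall>\<beta>\<in>{-1, 1}. \<delta> (Suc n) \<beta> =
           Min {t b | b. b \<in> {-1, 1} \<and> \<bar>\<beta> - b\<bar> < exp (- (2 ^ n * c n))})"
    proof (intro exI[of _ "\<lambda>_. D (Suc n)"] conjI ballI)
      fix bb :: real assume bb: "bb \<in> {-1, 1}"
      show "D (Suc n) \<in> tilde_set \<alpha> c \<delta> n bb" using tc[OF bb] by simp
      show "\<And>x. x \<in> tilde_set \<alpha> c \<delta> n bb \<Longrightarrow> x \<le> D (Suc n)" using tc[OF bb] by simp
    next
      fix \<beta> :: real assume \<beta>: "\<beta> \<in> {-1, 1}"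
      have "2 ^ n * c n > 0" using cpos by simp
      hence "exp (- (2 ^ n * c n)) < 1" by simp
      hence "{(\<lambda>_. D (Suc n)) b | b. b \<in> {-1, 1} \<and> \<bar>\<beta> - b\<bar> < exp (- (2 ^ n * c n))} = {(\<lambda>_. D (Suc n)) \<beta>}"
        using \<beta> by (intro set_eqI) (auto intro!: exI[of _ \<beta>])
      thus "\<delta> (Suc n) \<beta> = Min {(\<lambda>_. D (Suc n)) b | b. b \<in> {-1, 1} \<and> \<bar>\<beta> - b\<bar> < exp (- (2 ^ n * c n))}"
        unfolding \<delta>_def by simp
    qed
  qed
  have e: "\<exists>\<epsilon>>0. \<forall>n\<ge>1. \<forall>\<beta>\<in>{-1, 1}. \<epsilon> \<le> \<delta> n \<beta>"
    using d Dlow unfolding \<delta>_def by (intro exI[of _ "d/2"]) auto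
  show "\<exists>C::real. C > 0 \<and> (\<exists>c::nat \<Rightarrow> real. (\<forall>n. c n > 0) \<and> summable c \<and>
        (\<exists>N::nat. N \<ge> 1 \<and> (\<exists>\<delta>. wb_seq \<alpha> d c N \<delta> \<and>
           (\<exists>\<epsilon>>0. \<forall>n\<ge>1. \<forall>\<beta>\<in>{-1, 1}. \<epsilon> \<le> \<delta> n \<beta>))))"
    using cpos csum N1 seq e zero_less_one by blast
qed


theorem mainTheorem3:
  fixes \<alpha> :: real
  shows "weak_bryuno \<alpha> \<longleftrightarrow> bryuno \<alpha>"
  using weak_imp_bryuno bryuno_imp_weak by blast

end
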